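(* Let $f\in G$ have $f'(0)=-1$. Then (i) either $f$ is an involution (i.e. $f\circ f=\mathrm{id}$) or $R_f(G)=R_{f^2}(G)$; and (ii) $f\in R(G)$ if and only if $f^2\in R(G)$.
   Context: $G$ denotes the group (under composition) of biholomorphic germs at $0$ in one complex variable: germs of functions holomorphic near $0$ with $f(0)=0$ and $f'(0)\neq 0$. For $f\in G$, $R_f(G)$ is the set of $g\in G$ with $g^{-1}\circ f\circ g=f^{-1}$, and $R(G)$ is the set of $f\in G$ with $R_f(G)\neq\emptyset$. *)

theory Defs
  imports "HOL-Complex_Analysis.Complex_Analysis"
begin

text \<open>Germs at 0 are represented by functions; two functions define the same germ
  iff they agree on a neighbourhood of 0.\<close>
definition germ_eq :: "(complex \<Rightarrow> complex) \<Rightarrow> (complex \<Rightarrow> complex) \<Rightarrow> bool" where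
  "germ_eq f g \<longleftrightarrow> eventually (\<lambda>z. f z = g z) (nhds 0)"

definition inG :: "(complex \<Rightarrow> complex) \<Rightarrow> bool" where
  "inG f \<longleftrightarrow> f analytic_on {0} \<and> f 0 = 0 \<and> deriv f 0 \<noteq> 0"

definition germ_inv :: "(complex \<Rightarrow> complex) \<Rightarrow> (complex \<Rightarrow> complex) \<Rightarrow> bool" where
  "germ_inv f h \<longleftrightarrow> inG h \<and> germ_eq (h \<circ> f) id \<and> germ_eq (f \<circ> h) id"

definition Rf :: "(complex \<Rightarrow> complex) \<Rightarrow> (complex \<Rightarrow> complex) set" where
  "Rf f = {g. inG g \<and> (\<exists>gi fi. germ_inv g gi \<and> germ_inv f fi \<and> germ_eq (gi \<circ> f \<circ> g) fi)}"

definition RG :: "(complex \<Rightarrow> complex) set" where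
  "RG = {f. inG f \<and> Rf f \<noteq> {}}"

end

theory Submission
  imports Defs
begin

unbundle no vec_syntax

definition oge :: "nat \<Rightarrow> complex fps \<Rightarrow> bool" where
  "oge N P \<longleftrightarrow> (\<forall>i<N. P $ i = 0)"

lemma oge_0[simp]: "oge 0 P" by (simp add: oge_def)
lemma oge_zero[simp]: "oge N 0" by (simp add: oge_def)
lemma oge_1: "oge 1 P \<longleftrightarrow> P $ 0 = 0" by (simp add: oge_def)
lemma oge_mono: "oge N P \<Longrightarrow> M \<le> N \<Longrightarrow> oge M P" by (auto simp: oge_def)
lemma oge_add: "oge N P \<Longrightarrow> oge N Q \<Longrightarrow> oge N (P + Q)" by (simp add: oge_def)
lemma oge_diff: "oge N P \<Longrightarrow> oge N Q \<Longrightarrow> oge N (P - Q)" by (simp add: oge_def)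
lemma oge_nth: "oge N P \<Longrightarrow> n < N \<Longrightarrow> P $ n = 0" by (simp add: oge_def)

lemma oge_mult: assumes "oge a P" "oge b Q" shows "oge (a+b) (P*Q)"
  unfolding oge_def fps_mult_nth
proof (intro allI impI)
  fix n assume n: "n < a+b"
  show "(\<Sum>i = 0..n. P $ i * Q $ (n - i)) = 0"
  proof (rule sum.neutral, rule ballI)
    fix i assume i: "i \<in> {0..n}"
    show "P $ i * Q $ (n - i) = 0"
    proof (cases "i < a")
      case True then show ?thesis using assms(1) by (simp add: oge_def)
    next
      case False then have "n - i < b" using n i by auto
      then show ?thesis using assms(2) by (simp add: oge_def)
    qed
  qed
qed

lemma oge_mult_left: "oge b Q \<Longrightarrow> oge b (P*Q)"
  using oge_mult[of 0 P b Q] by simp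

lemma oge_mult_nth: assumes "oge a P" "oge b Q" shows "(P*Q) $ (a+b) = P$a * Q$b"
proof -
  have "(P*Q) $ (a+b) = (\<Sum>i = 0..a+b. P $ i * Q $ (a + b - i))" by (rule fps_mult_nth)
  also have "\<dots> = P $ a * Q $ (a + b - a) + (\<Sum>i \<in> {0..a+b} - {a}. P $ i * Q $ (a + b - i))"
    by (rule sum.remove) auto
  also have "(\<Sum>i \<in> {0..a+b} - {a}. P $ i * Q $ (a + b - i)) = 0"
  proof (rule sum.neutral, rule ballI)
    fix i assume i: "i \<in> {0..a+b} - {a}"
    show "P $ i * Q $ (a + b - i) = 0"
    proof (cases "i < a")
      case True then show ?thesis using assms(1) by (simp add: oge_def)
    next
      case False then have "a + b - i < b" using i by auto
      then show ?thesis using assms(2) by (simp add: oge_def)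
    qed
  qed
  finally show ?thesis by simp
qed

lemma oge_sum: "(\<And>i. i\<in>S \<Longrightarrow> oge N (f i)) \<Longrightarrow> oge N (sum f S)"
  by (simp add: oge_def fps_sum_nth)

lemma oge_compose: "oge N P \<Longrightarrow> oge N (P oo G)"
  by (auto simp: oge_def fps_compose_nth intro!: sum.neutral)

lemma oge_deriv: "oge (Suc N) P \<Longrightarrow> oge N (fps_deriv P)"
  by (simp add: oge_def)

lemma oge_power: "oge 1 G \<Longrightarrow> oge i (G^i)"
proof (induction i)
  case (Suc i) then show ?case using oge_mult[of 1 G i "G^i"] by simp
qed simp

lemma power_nth_lead: "oge 1 G \<Longrightarrow> (G^i)$i = (G$1)^i"
proof (induction i)
  case (Suc i) then show ?case using oge_mult_nth[of 1 G i "G^i"] oge_power[of G i] by simp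
qed simp

lemma compose_lead: assumes "oge k D" "oge 1 G" shows "(D oo G) $ k = D$k * (G$1)^k"
proof -
  have "(D oo G) $ k = (\<Sum>i=0..k. D$i * (G^i $ k))" by (rule fps_compose_nth)
  also have "\<dots> = D$k * (G^k $ k) + (\<Sum>i \<in> {0..k} - {k}. D$i * (G^i $ k))"
    by (rule sum.remove) auto
  also have "(\<Sum>i \<in> {0..k} - {k}. D$i * (G^i $ k)) = 0"
    using assms(1) by (auto simp: oge_def intro!: sum.neutral)
  finally show ?thesis using power_nth_lead[OF assms(2)] by simp
qed

definition Pm :: "complex fps \<Rightarrow> complex fps \<Rightarrow> nat \<Rightarrow> complex fps" where
  "Pm G E i = (G+E)^i - G^i - of_nat i * G^(i-1) * E"

lemma Pm_rec: "Pm G E (Suc (Suc j)) = (G+E) * Pm G E (Suc j) + of_nat (Suc j) * G^j * E^2"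
  unfolding Pm_def by (simp add: algebra_simps power2_eq_square)

lemma Pm_oge: assumes "oge 1 G" "oge e E" "1 \<le> e" shows "oge (i + 2*e - 2) (Pm G E i)"
proof (cases i)
  case 0 then show ?thesis by (simp add: Pm_def)
next
  case (Suc j)
  have "oge (Suc j + 2*e - 2) (Pm G E (Suc j))"
  proof (induction j)
    case 0 then show ?case by (simp add: Pm_def)
  next
    case (Suc j)
    have GE: "oge 1 (G+E)" using assms oge_mono[of e E 1] oge_add by simp
    have a: "oge (Suc (Suc j) + 2*e - 2) ((G+E) * Pm G E (Suc j))"
      using oge_mult[OF GE Suc.IH] assms(3) by (simp add: add.commute)
    have "oge (j + (e + e)) (G^j * (E * E))"
      by (intro oge_mult oge_power assms)
    then have "oge (j + (e + e)) (of_nat (Suc j) * G^j * E^2)"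
      using oge_mult_left by (simp add: power2_eq_square mult.assoc)
    then have b: "oge (Suc (Suc j) + 2*e - 2) (of_nat (Suc j) * G^j * E^2)"
      by (rule oge_mono) (use assms(3) in simp)
    show ?case using oge_add[OF a b] by (simp add: Pm_rec)
  qed
  then show ?thesis using Suc by simp
qed

definition Qf :: "complex fps \<Rightarrow> complex fps \<Rightarrow> complex fps \<Rightarrow> complex fps" where
  "Qf G E F = (F oo (G+E)) - (F oo G) - (fps_deriv F oo G) * E"

lemma Qf_add: "Qf G E (F1 + F2) = Qf G E F1 + Qf G E F2"
  unfolding Qf_def by (simp add: fps_compose_add_distrib algebra_simps)

lemma Qf_sum: "Qf G E (sum f S) = (\<Sum>i\<in>S. Qf G E (f i))"
proof (induction S rule: infinite_finite_induct)
  case (infinite A) then show ?case by (simp add: Qf_def)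
next
  case empty then show ?case by (simp add: Qf_def)
next
  case (insert x F) then show ?case by (simp add: Qf_add)
qed

lemma mono_compose: fixes H :: "complex fps" assumes "H$0 = 0" shows "(fps_const c * fps_X^i) oo H = fps_const c * H^i"
proof -
  have "(fps_const c * fps_X^i) oo H = fps_const c * (fps_X^i oo H)"
    by (rule fps_const_mult_apply_left[symmetric])
  also have "fps_X^i oo H = (fps_X oo H)^i" by (rule fps_compose_power[OF assms, symmetric])
  also have "fps_X oo H = H" using assms by simp
  finally show ?thesis .
qed

lemma Qf_mono: assumes "G$0 = 0" "E$0 = 0"
  shows "Qf G E (fps_const c * fps_X^i) = fps_const c * Pm G E i"
proof -
  have d: "fps_deriv (fps_const c * fps_X^i) = fps_const (c * of_nat i) * fps_X^(i-1)"
    by (simp add: fps_deriv_power)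
  show ?thesis
    unfolding Qf_def d Pm_def
    using mono_compose[of G c i] mono_compose[of "G+E" c i] mono_compose[of G "c * of_nat i" "i-1"] assms
    by (simp add: algebra_simps fps_of_nat flip: fps_const_mult)
qed

lemma taylor:
  assumes F: "oge f F" and G: "oge 1 G" and E: "oge e E" and e: "1 \<le> e"
  shows "oge (f + 2*e - 2) (Qf G E F)"
proof -
  define N where "N = f + 2*e - 2"
  define T where "T = (\<Sum>i<N. fps_const (F$i) * fps_X^i)"
  define W where "W = F - T"
  have G0: "G$0 = 0" and E0: "E$0 = 0" using G E e by (auto simp: oge_def)
  have W: "oge N W"
    unfolding oge_def W_def T_def by (auto simp: fps_sum_nth if_distrib cong: if_cong)
  have "Qf G E F = Qf G E T + Qf G E W" unfolding W_def by (simp flip: Qf_add)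
  moreover have "oge N (Qf G E W)"
  proof -
    have GE0: "(G+E)$0 = 0" using G0 E0 by simp
    have a: "oge N (W oo (G+E))" "oge N (W oo G)" using W oge_compose by auto
    have b: "oge N ((fps_deriv W oo G) * E)"
    proof (cases N)
      case 0 then show ?thesis by simp
    next
      case (Suc M)
      have "oge (M + e) ((fps_deriv W oo G) * E)"
        by (intro oge_mult oge_compose oge_deriv E) (use W Suc in simp)
      then show ?thesis by (rule oge_mono) (use e Suc in simp)
    qed
    show ?thesis unfolding Qf_def by (intro oge_diff a b)
  qed
  moreover have "oge N (Qf G E T)"
    unfolding T_def Qf_sum
  proof (rule oge_sum)
    fix i assume i: "i \<in> {..<N}"
    show "oge N (Qf G E (fps_const (F$i) * fps_X^i))"
    proof (cases "i < f")
      case True then have "F$i = 0" using F by (simp add: oge_def)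
      then show ?thesis by (simp add: Qf_def)
    next
      case False
      have "oge (i + 2*e - 2) (Pm G E i)" by (rule Pm_oge[OF G E e])
      then have "oge N (Pm G E i)" by (rule oge_mono) (use False e in \<open>simp add: N_def\<close>)
      then show ?thesis using Qf_mono[OF G0 E0] oge_mult_left by simp
    qed
  qed
  ultimately show ?thesis unfolding N_def[symmetric] by (simp add: oge_add)
qed

lemma oge_subdegree: "oge (subdegree P) P"
  by (auto simp: oge_def)

lemma main_fps:
  fixes A B :: "complex fps"
  assumes A0: "A$0 = 0" and B0: "B$0 = 0" and A1: "A$1 = -1" and B1: "B$1 = -1"
    and AB: "(A oo A) = (B oo B)" and HX: "(A oo A) \<noteq> fps_X"
  shows "A = B"
proof (rule ccontr)
  assume "A \<noteq> B"
  define D where "D = B - A"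
  have D0: "D \<noteq> 0" using \<open>A \<noteq> B\<close> by (simp add: D_def)
  define k where "k = subdegree D"
  have Dk: "oge k D" unfolding k_def by (rule oge_subdegree)
  have k2: "2 \<le> k" unfolding k_def
    by (rule subdegree_geI[OF D0]) (use A0 B0 A1 B1 in \<open>auto simp: D_def less_2_cases_iff\<close>)
  define d where "d = D$k"
  have d0: "d \<noteq> 0" unfolding d_def k_def using D0 by simp
  have BAD: "B = A + D" by (simp add: D_def)
  have oA: "oge 1 A" and oB: "oge 1 B" using A0 B0 unfolding oge_def by auto
  have oD: "oge 1 D" using Dk k2 oge_mono by auto
  define H where "H = A oo A"
  define C where "C = H - fps_X"
  have C0: "C \<noteq> 0" using HX by (simp add: C_def H_def)
  have H1: "H $ 1 = 1" unfolding H_def using compose_lead[of 1 A A] oA A1 by simp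
  have H0: "H $ 0 = 0" unfolding H_def using A0 by simp
  define m where "m = subdegree C"
  have Cm: "oge m C" unfolding m_def by (rule oge_subdegree)
  have m2: "2 \<le> m" unfolding m_def
    by (rule subdegree_geI[OF C0]) (use H0 H1 in \<open>auto simp: C_def less_2_cases_iff\<close>)
  define c where "c = C$m"
  have c0: "c \<noteq> 0" unfolding c_def m_def using C0 by simp
  have T1: "oge (1 + 2*k - 2) (Qf A D A)"
    by (rule taylor[OF oA oA Dk]) (use k2 in simp)
  have "(Qf A D A) $ k = 0" by (rule oge_nth[OF T1]) (use k2 in simp)
  moreover have "((fps_deriv A oo A) * D) $ (0 + k) = (fps_deriv A oo A) $ 0 * D $ k"
    by (rule oge_mult_nth[OF oge_0 Dk])
  ultimately have e1: "(A oo B) $ k - (A oo A) $ k = - d"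
    using A1 by (simp add: Qf_def BAD d_def)
  have e2: "(D oo B) $ k = d * (-1)^k" using compose_lead[OF Dk oB] B1 by (simp add: d_def)
  have "(B oo B) $ k = (A oo B) $ k + (D oo B) $ k"
  proof -
    have "(A + D) oo B = (A oo B) + (D oo B)" by (rule fps_compose_add_distrib)
    then show ?thesis using BAD by simp
  qed
  then have "d * (-1)^k = d" using e1 e2 AB by (simp add: algebra_simps)
  then have "(-1::complex)^k = 1" using d0 by simp
  then have keven: "even k" by (metis neg_one_odd_power one_neq_neg_one)
  have HB: "B oo H = H oo B" unfolding H_def AB using fps_compose_assoc[OF B0 B0, of B] by simp
  have HA: "A oo H = H oo A" unfolding H_def using fps_compose_assoc[OF A0 A0, of A] by simp
  have HXC: "H = fps_X + C" by (simp add: C_def)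
  have "D oo H = (H oo B) - (H oo A)"
    using HB HA by (simp add: D_def fps_compose_sub_distrib)
  also have "\<dots> = D + ((C oo B) - (C oo A))"
    using A0 B0 by (simp add: HXC fps_compose_add_distrib D_def)
  finally have eqH: "D oo H = D + ((C oo B) - (C oo A))" .
  have T2: "oge (m + 2*k - 2) (Qf A D C)"
    by (rule taylor[OF Cm oA Dk]) (use k2 in simp)
  have T3: "oge (k + 2*m - 2) (Qf fps_X C D)"
    by (rule taylor[OF Dk _ Cm]) (use m2 in \<open>auto simp: oge_def\<close>)
  define n where "n = k + m - 1"
  have n1: "(Qf A D C) $ n = 0" by (rule oge_nth[OF T2]) (use k2 m2 in \<open>simp add: n_def\<close>)
  have n2: "(Qf fps_X C D) $ n = 0" by (rule oge_nth[OF T3]) (use k2 m2 in \<open>simp add: n_def\<close>)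
  have X0: "(fps_X :: complex fps) $ 0 = 0" by simp
  have Dd: "oge (k-1) (fps_deriv D)" by (rule oge_deriv) (use Dk k2 in simp)
  have Cd: "oge (m-1) (fps_deriv C)" by (rule oge_deriv) (use Cm m2 in simp)
  have l1: "(fps_deriv D * C) $ (k - 1 + m) = of_nat k * d * c"
    using oge_mult_nth[OF Dd Cm] k2 by (simp add: d_def c_def)
  have Cdl: "(fps_deriv C oo A) $ (m-1) = of_nat m * c * (-1)^(m-1)"
    using compose_lead[OF Cd oA] m2 A1 by (simp add: c_def)
  have l2: "((fps_deriv C oo A) * D) $ (m - 1 + k) = of_nat m * c * (-1)^(m-1) * d"
    using oge_mult_nth[OF oge_compose[OF Cd] Dk, of A] Cdl by (simp add: d_def)
  have nn: "n = k - 1 + m" "n = m - 1 + k" using k2 m2 by (auto simp: n_def)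
  have "(D oo H) $ n = D $ n + (fps_deriv D * C) $ n"
    using n2 by (simp add: Qf_def HXC algebra_simps)
  moreover have "(D + ((C oo B) - (C oo A))) $ n = D $ n + ((fps_deriv C oo A) * D) $ n"
    using n1 by (simp add: Qf_def BAD algebra_simps)
  ultimately have "(fps_deriv D * C) $ n = ((fps_deriv C oo A) * D) $ n"
    using eqH by simp
  then have "of_nat k * d * c = of_nat m * c * (-1)^(m-1) * d"
    using l1 l2 nn by metis
  then have km: "(of_nat k :: complex) = of_nat m * (-1)^(m-1)"
    using c0 d0 by (simp add: field_simps)
  show False
  proof (cases "even (m - 1)")
    case True
    then have "k = m" using km by simp
    then show False using keven True m2 by (cases m) auto
  next
    case False
    then have "(of_nat k :: complex) = - of_nat m" using km by simp
    then have "(of_nat (k + m) :: complex) = 0" by simp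
    then show False using k2 by (simp only: of_nat_eq_0_iff)
  qed
qed

definition c0 :: "(complex \<Rightarrow> complex) \<Rightarrow> bool" where
  "c0 g \<longleftrightarrow> isCont g 0 \<and> g 0 = 0"

lemma ge_refl[simp]: "germ_eq f f" by (simp add: germ_eq_def)
lemma ge_sym: "germ_eq f g \<Longrightarrow> germ_eq g f" by (simp add: germ_eq_def eq_commute)
lemma ge_trans: "germ_eq f g \<Longrightarrow> germ_eq g h \<Longrightarrow> germ_eq f h"
  unfolding germ_eq_def by (auto elim: eventually_elim2)
lemma ge_cL: "germ_eq g1 g2 \<Longrightarrow> germ_eq (f \<circ> g1) (f \<circ> g2)"
  unfolding germ_eq_def by (auto elim: eventually_mono)
lemma ge_cR: assumes "germ_eq f1 f2" "c0 g" shows "germ_eq (f1 \<circ> g) (f2 \<circ> g)"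
proof -
  have ev: "eventually (\<lambda>z. f1 z = f2 z) (nhds 0)" using assms(1) by (simp add: germ_eq_def)
  have lim: "filterlim g (nhds 0) (at 0)" using assms(2) unfolding c0_def isCont_def by metis
  have "eventually (\<lambda>z. f1 (g z) = f2 (g z)) (at 0)"
    using eventually_compose_filterlim[OF ev lim] .
  moreover have "f1 (g 0) = f2 (g 0)" using assms(2) ev eventually_nhds_x_imp_x by (auto simp: c0_def)
  ultimately show ?thesis by (simp add: germ_eq_def eventually_nhds_conv_at)
qed

lemma c0_comp: "c0 f \<Longrightarrow> c0 g \<Longrightarrow> c0 (f \<circ> g)"
  unfolding c0_def by (auto intro: continuous_at_compose)

lemma inG_c0: "inG f \<Longrightarrow> c0 f"
  unfolding inG_def c0_def by (auto intro: analytic_at_imp_isCont)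

lemma inG_comp: assumes "inG f" "inG g" shows "inG (f \<circ> g)" "deriv (f \<circ> g) 0 = deriv f 0 * deriv g 0"
proof -
  have g0: "g 0 = 0" using assms by (simp add: inG_def)
  have dg: "g field_differentiable at 0" "f field_differentiable at 0"
    using assms by (auto simp: inG_def intro: analytic_on_imp_differentiable_at)
  have d: "deriv (f \<circ> g) 0 = deriv f 0 * deriv g 0"
    using deriv_chain[of g 0 f] dg g0 by simp
  show "deriv (f \<circ> g) 0 = deriv f 0 * deriv g 0" by (rule d)
  show "inG (f \<circ> g)"
    using assms d unfolding inG_def by (auto intro: analytic_on_compose_gen)
qed

lemma inG_id: "inG id" by (simp add: inG_def analytic_on_id)

lemma ge_deriv: "germ_eq f g \<Longrightarrow> deriv f 0 = deriv g 0"
  unfolding germ_eq_def by (rule deriv_cong_ev) auto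

lemma fps_exp_nth01: fixes f :: "complex \<Rightarrow> complex" assumes "f has_fps_expansion F" shows "F $ 0 = f 0" "F $ 1 = deriv f 0"
  using fps_nth_fps_expansion[OF assms, of 0] fps_nth_fps_expansion[OF assms, of 1] by auto

lemma fps_exp_unique: fixes f g :: "complex \<Rightarrow> complex" assumes "f has_fps_expansion F" "g has_fps_expansion G" "germ_eq f g"
  shows "F = G"
proof (rule fps_ext)
  fix n
  show "F $ n = G $ n"
    using fps_nth_fps_expansion[OF assms(1), of n] fps_nth_fps_expansion[OF assms(2), of n]
      higher_deriv_cong_ev[of f g 0 0 n] assms(3) by (simp add: germ_eq_def)
qed

lemma fps_exp_germ: assumes "f has_fps_expansion F" "g has_fps_expansion F" shows "germ_eq f g"
  using assms unfolding has_fps_expansion_def germ_eq_def by (auto elim: eventually_elim2)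

lemma key:
  assumes a: "inG a" and b: "inG b" and da: "deriv a 0 = -1" and db: "deriv b 0 = -1"
    and ab: "germ_eq (a \<circ> a) (b \<circ> b)" and nid: "\<not> germ_eq (a \<circ> a) id"
  shows "germ_eq a b"
proof -
  define A where "A = fps_expansion a 0"
  define B where "B = fps_expansion b 0"
  have eA: "a has_fps_expansion A" unfolding A_def using a
    by (intro analytic_at_imp_has_fps_expansion_0) (simp add: inG_def)
  have eB: "b has_fps_expansion B" unfolding B_def using b
    by (intro analytic_at_imp_has_fps_expansion_0) (simp add: inG_def)
  have A0: "A$0 = 0" "A$1 = -1" using fps_exp_nth01[OF eA] a da by (auto simp: inG_def)
  have B0: "B$0 = 0" "B$1 = -1" using fps_exp_nth01[OF eB] b db by (auto simp: inG_def)
  have eAA: "(a \<circ> a) has_fps_expansion (A oo A)" by (rule has_fps_expansion_compose[OF eA eA A0(1)])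
  have eBB: "(b \<circ> b) has_fps_expansion (B oo B)" by (rule has_fps_expansion_compose[OF eB eB B0(1)])
  have AB: "(A oo A) = (B oo B)" by (rule fps_exp_unique[OF eAA eBB ab])
  have HX: "(A oo A) \<noteq> fps_X"
  proof
    assume "(A oo A) = fps_X"
    then have "(a \<circ> a) has_fps_expansion fps_X" using eAA by simp
    moreover have "id has_fps_expansion fps_X" unfolding id_def by (rule has_fps_expansion_fps_X)
    ultimately show False using nid fps_exp_germ by blast
  qed
  have "A = B" by (rule main_fps[OF A0(1) B0(1) A0(2) B0(2) AB HX])
  then show ?thesis using eA eB fps_exp_germ by simp
qed

lemma ge_subst: "germ_eq f g \<Longrightarrow> f = f' \<Longrightarrow> g = g' \<Longrightarrow> germ_eq f' g'" by simp

lemma Rf_sub: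
  assumes f: "inG f"
  shows "Rf f \<subseteq> Rf (f \<circ> f)"
proof
  fix g assume "g \<in> Rf f"
  then obtain gi fi where g: "inG g" and ggi: "germ_inv g gi" and ffi: "germ_inv f fi"
    and rel: "germ_eq (gi \<circ> f \<circ> g) fi" by (auto simp: Rf_def)
  have gi: "inG gi" and g1: "germ_eq (gi \<circ> g) id" and g2: "germ_eq (g \<circ> gi) id"
    using ggi by (auto simp: germ_inv_def)
  have fi: "inG fi" and f1: "germ_eq (fi \<circ> f) id" and f2: "germ_eq (f \<circ> fi) id"
    using ffi by (auto simp: germ_inv_def)
  have cf: "c0 f" "c0 fi" "c0 g" "c0 gi" using f fi g gi by (simp_all add: inG_c0)
  have i1: "germ_eq ((fi \<circ> fi) \<circ> (f \<circ> f)) id"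
  proof -
    have "germ_eq ((fi \<circ> f) \<circ> f) (id \<circ> f)" by (rule ge_cR[OF f1 cf(1)])
    then have "germ_eq (fi \<circ> ((fi \<circ> f) \<circ> f)) (fi \<circ> f)" using ge_cL[of _ _ "_"] by (simp only: id_comp ge_cL)
    then have "germ_eq ((fi \<circ> fi) \<circ> (f \<circ> f)) (fi \<circ> f)" by (simp add: comp_assoc)
    then show ?thesis using f1 ge_trans by blast
  qed
  have i2: "germ_eq ((f \<circ> f) \<circ> (fi \<circ> fi)) id"
  proof -
    have "germ_eq ((f \<circ> fi) \<circ> fi) (id \<circ> fi)" by (rule ge_cR[OF f2 cf(2)])
    then have "germ_eq (f \<circ> ((f \<circ> fi) \<circ> fi)) (f \<circ> fi)" using ge_cL[of _ _ "_"] by (simp only: id_comp ge_cL)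
    then have "germ_eq ((f \<circ> f) \<circ> (fi \<circ> fi)) (f \<circ> fi)" by (simp add: comp_assoc)
    then show ?thesis using f2 ge_trans by blast
  qed
  have r: "germ_eq (gi \<circ> (f \<circ> f) \<circ> g) (fi \<circ> fi)"
  proof -
    have cfg: "c0 (f \<circ> g)" using cf c0_comp by blast
    have cb: "c0 (gi \<circ> f \<circ> g)" using cf c0_comp by blast
    have "germ_eq ((g \<circ> gi) \<circ> (f \<circ> g)) (id \<circ> (f \<circ> g))" by (rule ge_cR[OF g2 cfg])
    then have "germ_eq ((gi \<circ> f) \<circ> ((g \<circ> gi) \<circ> (f \<circ> g))) ((gi \<circ> f) \<circ> (f \<circ> g))"
      using ge_cL[of _ _ "_"] by (simp only: id_comp ge_cL)
    then have s1: "germ_eq (gi \<circ> (f \<circ> f) \<circ> g) ((gi \<circ> f \<circ> g) \<circ> (gi \<circ> f \<circ> g))"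
      by (rule ge_sym[THEN ge_subst]) (simp_all add: comp_assoc)
    have s2: "germ_eq ((gi \<circ> f \<circ> g) \<circ> (gi \<circ> f \<circ> g)) (fi \<circ> (gi \<circ> f \<circ> g))"
      by (rule ge_cR[OF rel cb])
    have s3: "germ_eq (fi \<circ> (gi \<circ> f \<circ> g)) (fi \<circ> fi)" by (rule ge_cL[OF rel])
    show ?thesis using s1 s2 s3 ge_trans by blast
  qed
  have "inG (fi \<circ> fi)" using fi inG_comp by blast
  then have "germ_inv (f \<circ> f) (fi \<circ> fi)" using i1 i2 by (simp add: germ_inv_def)
  then show "g \<in> Rf (f \<circ> f)" using g ggi r by (auto simp: Rf_def)
qed


lemma Rf_sup:
  assumes f: "inG f" and df: "deriv f 0 = -1" and nid: "\<not> germ_eq (f \<circ> f) id"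
  shows "Rf (f \<circ> f) \<subseteq> Rf f"
proof
  fix g assume "g \<in> Rf (f \<circ> f)"
  then obtain gi Fi where g: "inG g" and ggi: "germ_inv g gi" and FFi: "germ_inv (f \<circ> f) Fi"
    and rel: "germ_eq (gi \<circ> (f \<circ> f) \<circ> g) Fi" by (auto simp: Rf_def)
  have gi: "inG gi" and g1: "germ_eq (gi \<circ> g) id" and g2: "germ_eq (g \<circ> gi) id"
    using ggi by (auto simp: germ_inv_def)
  have Fi: "inG Fi" and F1: "germ_eq (Fi \<circ> (f \<circ> f)) id" and F2: "germ_eq ((f \<circ> f) \<circ> Fi) id"
    using FFi by (auto simp: germ_inv_def)
  define fi where "fi = Fi \<circ> f"
  have fiG: "inG fi" unfolding fi_def by (rule inG_comp(1)[OF Fi f])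
  have cf: "c0 f" "c0 fi" "c0 g" "c0 gi" "c0 Fi" using f fiG g gi Fi by (simp_all add: inG_c0)
  have fi1: "germ_eq (fi \<circ> f) id" using F1 by (simp add: fi_def comp_assoc)
  have LR: "germ_eq fi (f \<circ> Fi)"
  proof -
    have a: "germ_eq (fi \<circ> ((f \<circ> f) \<circ> Fi)) (fi \<circ> id)" by (rule ge_cL[OF F2])
    have "germ_eq ((fi \<circ> f) \<circ> (f \<circ> Fi)) (id \<circ> (f \<circ> Fi))"
      by (rule ge_cR[OF fi1]) (use cf c0_comp in blast)
    then have b: "germ_eq (fi \<circ> ((f \<circ> f) \<circ> Fi)) (f \<circ> Fi)" by (simp add: comp_assoc)
    show ?thesis using ge_trans[OF ge_sym[OF a[unfolded comp_id]] b] .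
  qed
  have fi2: "germ_eq (f \<circ> fi) id"
  proof -
    have "germ_eq (f \<circ> fi) (f \<circ> (f \<circ> Fi))" by (rule ge_cL[OF LR])
    then have "germ_eq (f \<circ> fi) ((f \<circ> f) \<circ> Fi)" by (simp add: comp_assoc)
    then show ?thesis using F2 ge_trans by blast
  qed
  have finv: "germ_inv f fi" using fiG fi1 fi2 by (simp add: germ_inv_def)
  have da: "deriv fi 0 = -1"
  proof -
    have "deriv (fi \<circ> f) 0 = deriv id 0" by (rule ge_deriv[OF fi1])
    then have "deriv fi 0 * deriv f 0 = 1" using inG_comp(2)[OF fiG f] by simp
    then show ?thesis using df by (simp add: algebra_simps) (metis minus_equation_iff)
  qed
  define b where "b = gi \<circ> f \<circ> g"
  have bG: "inG b" unfolding b_def using gi f g inG_comp by blast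
  have db: "deriv b 0 = -1"
  proof -
    have "deriv (gi \<circ> g) 0 = deriv id 0" by (rule ge_deriv[OF g1])
    then have "deriv gi 0 * deriv g 0 = 1" using inG_comp(2)[OF gi g] by simp
    moreover have "deriv b 0 = deriv gi 0 * deriv f 0 * deriv g 0"
      unfolding b_def using inG_comp[OF gi f] inG_comp(2)[OF inG_comp(1)[OF gi f] g] by simp
    ultimately show ?thesis using df by (simp add: algebra_simps)
  qed
  have bb: "germ_eq (b \<circ> b) Fi"
  proof -
    have cfg: "c0 (f \<circ> g)" using cf c0_comp by blast
    have "germ_eq ((g \<circ> gi) \<circ> (f \<circ> g)) (id \<circ> (f \<circ> g))" by (rule ge_cR[OF g2 cfg])
    then have "germ_eq ((gi \<circ> f) \<circ> ((g \<circ> gi) \<circ> (f \<circ> g))) ((gi \<circ> f) \<circ> (f \<circ> g))"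
      using ge_cL[of _ _ "_"] by (simp only: id_comp ge_cL)
    then have s1: "germ_eq (b \<circ> b) (gi \<circ> (f \<circ> f) \<circ> g)"
      by (rule ge_subst) (simp_all add: comp_assoc b_def)
    show ?thesis using s1 rel ge_trans by blast
  qed
  have i1: "germ_eq ((fi \<circ> fi) \<circ> (f \<circ> f)) id"
  proof -
    have "germ_eq ((fi \<circ> f) \<circ> f) (id \<circ> f)" by (rule ge_cR[OF fi1 cf(1)])
    then have "germ_eq (fi \<circ> ((fi \<circ> f) \<circ> f)) (fi \<circ> f)" using ge_cL[of _ _ "_"] by (simp only: id_comp ge_cL)
    then have "germ_eq ((fi \<circ> fi) \<circ> (f \<circ> f)) (fi \<circ> f)" by (simp add: comp_assoc)
    then show ?thesis using fi1 ge_trans by blast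
  qed
  have aa: "germ_eq Fi (fi \<circ> fi)"
  proof -
    have "germ_eq (((fi \<circ> fi) \<circ> (f \<circ> f)) \<circ> Fi) (id \<circ> Fi)" by (rule ge_cR[OF i1 cf(5)])
    then have s1: "germ_eq Fi ((fi \<circ> fi) \<circ> ((f \<circ> f) \<circ> Fi))"
      by (rule ge_sym[THEN ge_subst]) (simp_all add: comp_assoc)
    have s2: "germ_eq ((fi \<circ> fi) \<circ> ((f \<circ> f) \<circ> Fi)) ((fi \<circ> fi) \<circ> id)" by (rule ge_cL[OF F2])
    show ?thesis using ge_trans[OF s1 s2[unfolded comp_id]] .
  qed
  have ab: "germ_eq (fi \<circ> fi) (b \<circ> b)" using aa bb ge_sym ge_trans by blast
  have nid2: "\<not> germ_eq (fi \<circ> fi) id"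
  proof
    assume h: "germ_eq (fi \<circ> fi) id"
    have s1: "germ_eq ((f \<circ> f) \<circ> (fi \<circ> fi)) ((f \<circ> f) \<circ> id)" by (rule ge_cL[OF h])
    have "germ_eq ((f \<circ> fi) \<circ> fi) (id \<circ> fi)" by (rule ge_cR[OF fi2 cf(2)])
    then have "germ_eq (f \<circ> ((f \<circ> fi) \<circ> fi)) (f \<circ> fi)" using ge_cL[of _ _ "_"] by (simp only: id_comp ge_cL)
    then have "germ_eq ((f \<circ> f) \<circ> (fi \<circ> fi)) (f \<circ> fi)" by (simp add: comp_assoc)
    then have s2: "germ_eq ((f \<circ> f) \<circ> (fi \<circ> fi)) id" using fi2 ge_trans by blast
    have "germ_eq (f \<circ> f) id" using ge_trans[OF ge_sym[OF s1[unfolded comp_id]] s2] .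
    then show False using nid by simp
  qed
  have "germ_eq fi b" by (rule key[OF fiG bG da db ab nid2])
  then have "germ_eq (gi \<circ> f \<circ> g) fi" using ge_sym by (simp add: b_def)
  then show "g \<in> Rf f" using g ggi finv by (auto simp: Rf_def)
qed

theorem corollary4p1:
  fixes f :: "complex \<Rightarrow> complex"
  assumes "inG f" and "deriv f 0 = -1"
  shows "(germ_eq (f \<circ> f) id \<or> Rf f = Rf (f \<circ> f)) \<and> (f \<in> RG \<longleftrightarrow> f \<circ> f \<in> RG)"
proof -
  have f: "inG f" by (rule assms(1))
  have ff: "inG (f \<circ> f)" by (rule inG_comp(1)[OF f f])
  show ?thesis
  proof (cases "germ_eq (f \<circ> f) id")
    case True
    have idinv: "germ_inv id id" using inG_id by (simp add: germ_inv_def)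
    have finv: "germ_inv f f" using f True by (simp add: germ_inv_def)
    have "germ_inv id id \<and> germ_inv f f \<and> germ_eq (id \<circ> f \<circ> id) f" using idinv finv by simp
    then have "id \<in> Rf f" unfolding Rf_def using inG_id by blast
    then have A: "f \<in> RG" using f by (auto simp: RG_def)
    have "germ_eq ((f \<circ> f) \<circ> (f \<circ> f)) (id \<circ> (f \<circ> f))"
      by (rule ge_cR[OF True]) (use ff inG_c0 in blast)
    then have "germ_eq ((f \<circ> f) \<circ> (f \<circ> f)) id" using ge_trans[OF _ True] by simp
    then have ffinv: "germ_inv (f \<circ> f) (f \<circ> f)" using ff by (simp add: germ_inv_def)
    have "germ_inv id id \<and> germ_inv (f \<circ> f) (f \<circ> f) \<and> germ_eq (id \<circ> (f \<circ> f) \<circ> id) (f \<circ> f)"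
      using idinv ffinv by simp
    then have "id \<in> Rf (f \<circ> f)" unfolding Rf_def using inG_id by blast
    then have B: "f \<circ> f \<in> RG" using ff by (auto simp: RG_def)
    show ?thesis using True A B by simp
  next
    case False
    have eq: "Rf f = Rf (f \<circ> f)" using Rf_sub[OF f] Rf_sup[OF f assms(2) False] by blast
    show ?thesis using eq f ff by (auto simp: RG_def)
  qed
qed

end
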